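(* Let $p$ be a prime, let $f(x)\in\mathbb{Z}_p[x]$, let $\alpha,n\in\mathbb{N}=\{0,1,2,\dots\}$ and $r\in\mathbb{Z}$. Then $$\operatorname{ord}_p\Bigg(\sum_{k\equiv r\ (\mathrm{mod}\ p^{\alpha})}\binom nk(-1)^kf\Big(\frac{k-r}{p^{\alpha}}\Big)\Bigg)\ \geqslant\ \operatorname{ord}_p\Big(\Big\lfloor\frac n{p^{\alpha-1}}\Big\rfloor!\Big)-\deg f+\tau_p\big(\{r\}_{p^{\alpha-1}},\{n-r\}_{p^{\alpha-1}}\big).$$ Equivalently, $p^{\deg f}\sum_{k\equiv r\,(\mathrm{mod}\ p^{\alpha})}\binom nk(-1)^kf\big(\frac{k-r}{p^{\alpha}}\big)\equiv 0 \pmod{p^{\sum_{i=\alpha}^{\infty}\lfloor n/p^i\rfloor+\tau_p(\{r\}_{p^{\alpha-1}},\{n-r\}_{p^{\alpha-1}})}}$.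
   Context: The sum runs over all integers $k$ with $k\equiv r \pmod{p^\alpha}$; $\binom nk=0$ unless $0\le k\le n$, so it is finite. $\mathbb{Z}_p$ is the ring of $p$-adic integers; for $\omega\in\mathbb{Q}_p\setminus\{0\}$, $\operatorname{ord}_p(\omega)=\max\{a\in\mathbb{Z}:\omega/p^a\in\mathbb{Z}_p\}$ and $\operatorname{ord}_p(0)=+\infty$. The degree of the zero polynomial is $-\infty$. For an integer $a$ and a positive real $m$, $\{a\}_m$ denotes the unique number in $[0,m)$ with $a-\{a\}_m\in m\mathbb{Z}$ (so for $m=p^{-1}$, $\{a\}_m=0$). For $a,b\in\mathbb{N}$, $\tau_p(a,b)$ is the number of carries when adding $a$ and $b$ in base $p$ (equivalently $\operatorname{ord}_p\binom{a+b}{a}$). When $\alpha=0$, $\lfloor n/p^{-1}\rfloor=pn$. *)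

theory Defs
  imports "HOL-Computational_Algebra.Polynomial" "HOL-Computational_Algebra.Primes"
          "HOL-Number_Theory.Cong"
begin

text \<open>p-adic integers are modelled via the inverse limit Z_p = lim Z/p^m Z:
  an element is a sequence x :: nat => int of integer approximations with
  x (Suc m) == x m (mod p^m).  A polynomial f in Z_p[x] is modelled likewise
  as a sequence F :: nat => int poly of integer polynomials of uniformly
  bounded degree whose coefficients are coherent in this sense; the i-th
  coefficient of f is the p-adic integer (m => coeff (F m) i).\<close>

definition padic_poly_seq :: "nat \<Rightarrow> (nat \<Rightarrow> int poly) \<Rightarrow> bool" where
  "padic_poly_seq p F \<longleftrightarrow>
     (\<forall>m i. [coeff (F (Suc m)) i = coeff (F m) i] (mod int p ^ m)) \<and>
     (\<exists>d. \<forall>m. degree (F m) \<le> d)"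

definition padic_zero :: "nat \<Rightarrow> (nat \<Rightarrow> int) \<Rightarrow> bool" where
  "padic_zero p x \<longleftrightarrow> (\<forall>m. [x m = 0] (mod int p ^ m))"

text \<open>Degree of the p-adic polynomial: least d such that all coefficients of
  index > d vanish in Z_p (the zero polynomial gets 0 here instead of -infinity;
  this is harmless).\<close>
definition padic_poly_deg :: "nat \<Rightarrow> (nat \<Rightarrow> int poly) \<Rightarrow> nat" where
  "padic_poly_deg p F = (LEAST d. \<forall>i>d. padic_zero p (\<lambda>m. coeff (F m) i))"

text \<open>ord_p(x) \<ge> B for the p-adic integer with approximations x, B an integer:
  x is divisible by p^B in Z_p (vacuous for B \<le> 0), i.e. x m == 0 mod p^B for all m \<ge> B.\<close>
definition padic_ord_ge :: "nat \<Rightarrow> (nat \<Rightarrow> int) \<Rightarrow> int \<Rightarrow> bool" where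
  "padic_ord_ge p x B \<longleftrightarrow> (\<forall>m\<ge>nat B. [x m = 0] (mod int p ^ nat B))"

text \<open>Number of carries when adding a and b in base p, via ord_p of binomial(a+b, a).\<close>
definition carries :: "nat \<Rightarrow> nat \<Rightarrow> nat \<Rightarrow> nat" where
  "carries p a b = multiplicity p ((a + b) choose a)"

text \<open>floor(n / p^(alpha-1)), with the convention floor(n/p^(-1)) = p n.\<close>
definition floor_div_pow :: "nat \<Rightarrow> nat \<Rightarrow> nat \<Rightarrow> nat" where
  "floor_div_pow p \<alpha> n = (if \<alpha> = 0 then p * n else n div p ^ (\<alpha> - 1))"

text \<open>{a}_{p^(alpha-1)}: least nonnegative residue; equals 0 when alpha = 0.\<close>
definition frac_mod :: "nat \<Rightarrow> nat \<Rightarrow> int \<Rightarrow> nat" where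
  "frac_mod p \<alpha> a = (if \<alpha> = 0 then 0 else nat (a mod int p ^ (\<alpha> - 1)))"

definition binom_sum_approx :: "nat \<Rightarrow> (nat \<Rightarrow> int poly) \<Rightarrow> nat \<Rightarrow> nat \<Rightarrow> int \<Rightarrow> nat \<Rightarrow> int" where
  "binom_sum_approx p F \<alpha> n r m =
     (\<Sum>k\<in>{k\<in>{0..int n}. [k = r] (mod int p ^ \<alpha>)}.
        of_nat (n choose nat k) * (-1) ^ nat k * poly (F m) ((k - r) div int p ^ \<alpha>))"

end

theory Submission
  imports Defs
begin


definition Lf :: "nat \<Rightarrow> nat \<Rightarrow> nat" where
  "Lf p n = multiplicity p (fact n :: nat)"

lemma Lf_0[simp]: "Lf p 0 = 0" by (simp add: Lf_def)

lemma Lf_Suc: assumes "prime p" shows "Lf p (Suc n) = Lf p n + multiplicity p (Suc n)"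
proof -
  have "(fact (Suc n) :: nat) = Suc n * fact n" by simp
  then show ?thesis unfolding Lf_def
    using prime_elem_multiplicity_mult_distrib[of p "Suc n" "fact n :: nat"] assms
    by (simp add: prime_imp_prime_elem)
qed

lemma Lf_low: assumes "prime p" "c < p" shows "Lf p (p*x + c) = Lf p (p*x)"
  using assms(2)
proof (induction c)
  case 0 then show ?case by simp
next
  case (Suc c)
  have "\<not> p dvd (p*x + Suc c)"
  proof
    assume "p dvd p*x + Suc c"
    then have "p dvd Suc c" by (metis dvd_add_right_iff dvd_triv_left)
    then show False using Suc.prems by (auto dest: dvd_imp_le)
  qed
  then have "multiplicity p (Suc (p*x + c)) = 0"
    by (intro not_dvd_imp_multiplicity_0) simp
  then show ?case using Suc Lf_Suc[OF assms(1), of "p*x+c"] by simp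
qed

lemma Lf_mult: assumes "prime p" "c < p" shows "Lf p (p*x + c) = x + Lf p x"
proof -
  have p1: "p > 1" using assms prime_gt_1_nat by blast
  have "Lf p (p*x) = x + Lf p x"
  proof (induction x)
    case 0 then show ?case by simp
  next
    case (Suc x)
    have e: "p * Suc x = Suc (p*x + (p - 1))" using p1 by simp
    have "multiplicity p (p * Suc x) = Suc (multiplicity p (Suc x))"
      by (rule multiplicity_times_same) (use p1 in auto)
    then have "Lf p (p * Suc x) = Lf p (p*x + (p - 1)) + Suc (multiplicity p (Suc x))"
      using Lf_Suc[OF assms(1), of "p*x + (p-1)"] e by (simp only:)
    also have "Lf p (p*x + (p - 1)) = Lf p (p*x)" using Lf_low[OF assms(1), of "p-1" x] p1 by linarith
    finally show ?case using Suc Lf_Suc[OF assms(1), of x] by simp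
  qed
  then show ?thesis using Lf_low[OF assms] by simp
qed

lemma Lf_div: assumes "prime p" shows "Lf p n = n div p + Lf p (n div p)"
proof -
  have "n = p * (n div p) + n mod p" by simp
  moreover have "n mod p < p" using assms prime_gt_0_nat by simp
  ultimately show ?thesis using Lf_mult[OF assms, of "n mod p" "n div p"] by metis
qed

lemma Lf_lt: assumes "prime p" "x < p" shows "Lf p x = 0"
  using Lf_mult[OF assms, of 0] by simp

definition Gf :: "nat \<Rightarrow> nat \<Rightarrow> nat \<Rightarrow> nat" where
  "Gf p b x = (\<Sum>k\<in>{1..b}. x div p ^ k)"

lemma Lf_G: assumes "prime p" shows "Lf p x = Gf p b x + Lf p (x div p ^ b)"
proof (induction b)
  case 0 then show ?case by (simp add: Gf_def)
next
  case (Suc b)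
  have "Lf p (x div p^b) = x div p^b div p + Lf p (x div p^b div p)" using Lf_div[OF assms] .
  moreover have "x div p^b div p = x div p ^ Suc b" by (metis div_mult2_eq power_Suc2)
  moreover have "Gf p (Suc b) x = Gf p b x + x div p ^ Suc b" by (simp add: Gf_def)
  ultimately show ?case using Suc by simp
qed

lemma Lf_small: assumes "prime p" "x < p * p ^ b" shows "Lf p x = Gf p b x"
proof -
  have "p^b > 0" using assms(1) prime_gt_0_nat by simp
  then have "x div p^b < p" using assms(2) div_less_iff_less_mult[of "p^b" x p] by (simp add: mult.commute)
  then show ?thesis using Lf_G[OF assms(1), of x b] Lf_lt[OF assms(1)] by simp
qed

lemma G_mono: "x \<le> y \<Longrightarrow> Gf p b x \<le> Gf p b y"
  unfolding Gf_def by (intro sum_mono div_le_mono)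

lemma G_shift: assumes "p > 0" shows "Gf p b (x + j * p^b) = Gf p b x + j * Gf p b (p^b)"
proof -
  have "(x + j * p^b) div p^k = x div p^k + j * (p^b div p^k)" if "k \<in> {1..b}" for k
  proof -
    have "p^b = p^k * p^(b-k)" using that by (simp add: power_add[symmetric])
    then have "(x + j * p^b) div p^k = (x + (j * p^(b-k)) * p^k) div p^k"
      by (simp add: ac_simps)
    also have "\<dots> = x div p^k + j * p^(b-k)" using assms by simp
    finally show ?thesis using \<open>p^b = p^k * p^(b-k)\<close> assms by simp
  qed
  then show ?thesis unfolding Gf_def by (simp add: sum.distrib sum_distrib_left)
qed

lemma G_period:
  assumes "p > 0" "[int y = int y'] (mod int (p^b))"
  shows "int (Gf p b (y + a)) - Gf p b y = int (Gf p b (y' + a)) - Gf p b y'"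
proof -
  let ?Q = "p^b"
  have m: "y mod ?Q = y' mod ?Q" using assms(2)
    by (metis cong_int_iff unique_euclidean_semiring_class.cong_def)
  define z where "z = y mod ?Q"
  have y: "y = z + (y div ?Q) * ?Q" unfolding z_def by (metis mod_div_mult_eq add.commute)
  have y': "y' = z + (y' div ?Q) * ?Q" unfolding z_def m by (metis mod_div_mult_eq add.commute)
  have g: "int (Gf p b (z + j*?Q + a)) - Gf p b (z + j*?Q) = int (Gf p b (z + a)) - Gf p b z" for j
  proof -
    have "z + j*?Q + a = (z + a) + j*?Q" by simp
    then show ?thesis using G_shift[OF assms(1), of b "z+a" j] G_shift[OF assms(1), of b z j] by (simp add: ac_simps)
  qed
  show ?thesis using g[of "y div ?Q"] g[of "y' div ?Q"] y y' by metis
qed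

lemma carries_L: assumes "prime p"
  shows "carries p a b + Lf p a + Lf p b = Lf p (a + b)"
proof -
  have "fact a * fact (a + b - a) * ((a+b) choose a) = (fact (a+b) :: nat)"
    by (rule binomial_fact_lemma) simp
  then have e: "fact a * fact b * ((a+b) choose a) = (fact (a+b) :: nat)" by simp
  have pe: "prime_elem p" using assms by (simp add: prime_imp_prime_elem)
  have "multiplicity p (fact a * fact b * ((a+b) choose a) :: nat) =
        multiplicity p (fact a :: nat) + multiplicity p (fact b :: nat) + multiplicity p ((a+b) choose a)"
    using pe by (simp add: prime_elem_multiplicity_mult_distrib)
  then show ?thesis using e unfolding Lf_def carries_def by simp
qed



lemma NL:
  assumes pr: "prime p" and tn: "nat (r mod int p) \<le> n"
    and im: "i \<le> (n - nat (r mod int p)) div p"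
  shows "Lf p (n div (p * p^b)) + carries p (nat (r mod int (p * p^b))) (nat ((int n - r) mod int (p * p^b))) + Lf p (p*i)
   \<le> Lf p (i div p^b) + carries p (nat ((r div int p) mod int (p^b))) (nat ((int i - r div int p) mod int (p^b))) + Lf p n"
proof -
  define Q where "Q = p^b"
  have p1: "p > 1" using pr prime_gt_1_nat by blast
  have Q0: "Q > 0" unfolding Q_def using p1 by simp
  define t where "t = nat (r mod int p)"
  define s where "s = r div int p"
  have tp: "t < p" unfolding t_def using p1
    by (simp add: nat_less_iff)
  have r: "r = int t + int p * s" unfolding t_def s_def using p1
    by (simp add: mult.commute)
  define m where "m = (n - t) div p"
  define e where "e = (n - t) mod p"
  have ep: "e < p" unfolding e_def using p1 by simp
  have ne: "n = t + e + p*m" unfolding m_def e_def using tn t_def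
    by (metis add.assoc add_diff_inverse_nat mod_mult_div_eq not_less add.commute)
  define a1 where "a1 = nat (s mod int Q)"
  define b1 where "b1 = nat ((int i - s) mod int Q)"
  define c1 where "c1 = nat ((int m - s) mod int Q)"
  have a1Q: "a1 < Q" unfolding a1_def using Q0 by (simp add: nat_less_iff)
  have b1Q: "b1 < Q" unfolding b1_def using Q0 by (simp add: nat_less_iff)
  have c1Q: "c1 < Q" unfolding c1_def using Q0 by (simp add: nat_less_iff)
  have ha2: "nat (r mod int (p * Q)) = t + p*a1"
  proof -
    have "r mod (int p * int Q) = int p * (r div int p mod int Q) + r mod int p"
      by (rule zmod_zmult2_eq) simp
    moreover have "int a1 = s mod int Q" unfolding a1_def using Q0 by simp
    moreover have "int t = r mod int p" unfolding t_def using p1 by simp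
    ultimately have "r mod int (p * Q) = int (t + p*a1)" unfolding s_def by simp
    then show ?thesis by (metis nat_int)
  qed
  have hb2: "nat ((int n - r) mod int (p * Q)) = e + p*c1"
  proof -
    have x: "int n - r = int e + int p * (int m - s)" using ne r by (simp add: algebra_simps)
    have d: "(int n - r) div int p = int m - s" unfolding x using ep p1 by simp
    have md: "(int n - r) mod int p = int e" unfolding x using ep p1 by simp
    have "(int n - r) mod (int p * int Q) = int p * ((int n - r) div int p mod int Q) + (int n - r) mod int p"
      by (rule zmod_zmult2_eq) simp
    moreover have "int c1 = (int m - s) mod int Q" unfolding c1_def using Q0 by simp
    ultimately have "(int n - r) mod int (p * Q) = int (e + p*c1)" unfolding d md by simp
    then show ?thesis by (metis nat_int)
  qed
  define eps where "eps = (t + e) div p"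
  define n0 where "n0 = n mod p"
  have te: "t + e = n0 + p * eps" unfolding n0_def eps_def using ne
    by (metis mod_mult_self2 mod_mult_div_eq add.commute)
  have n0p: "n0 < p" unfolding n0_def using p1 by simp
  have ndp: "n div p = eps + m" using ne te n0p p1 by simp
  have "(t + e) div p < 2" using div_less_iff_less_mult[of p "t+e" 2] tp ep p1 by simp
  then have eps1: "eps \<le> 1" unfolding eps_def by simp
  have A: "Lf p (t + p*a1) = a1 + Lf p a1" using Lf_mult[OF pr tp, of a1] by (simp add: add.commute)
  have B: "Lf p (e + p*c1) = c1 + Lf p c1" using Lf_mult[OF pr ep, of c1] by (simp add: add.commute)
  have sum2: "(t + p*a1) + (e + p*c1) = p*(eps + a1 + c1) + n0" using te by (simp add: algebra_simps)
  have C: "Lf p ((t + p*a1) + (e + p*c1)) = (eps + a1 + c1) + Lf p (eps + a1 + c1)"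
    unfolding sum2 using Lf_mult[OF pr n0p] by simp
  have t2: "carries p (t + p*a1) (e + p*c1) + Lf p (t + p*a1) + Lf p (e + p*c1) = Lf p ((t + p*a1) + (e + p*c1))"
    by (rule carries_L[OF pr])
  have t1: "carries p a1 b1 + Lf p a1 + Lf p b1 = Lf p (a1 + b1)" by (rule carries_L[OF pr])
  have Ln: "Lf p n = (eps + m) + Lf p (eps + m)" using Lf_div[OF pr, of n] ndp by simp
  have Lnm: "Lf p (eps + m) = Gf p b (eps + m) + Lf p ((eps + m) div Q)" unfolding Q_def by (rule Lf_G[OF pr])
  have ndiv: "n div (p * Q) = (eps + m) div Q" using ndp by (simp add: div_mult2_eq)
  have Lpi: "Lf p (p*i) = i + Lf p i" using Lf_mult[OF pr, of 0 i] p1 by simp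
  have Li: "Lf p i = Gf p b i + Lf p (i div Q)" unfolding Q_def by (rule Lf_G[OF pr])
  have pQ: "2 * Q \<le> p * Q" using p1 by simp
  have sa1: "Lf p a1 = Gf p b a1" using Lf_small[OF pr, of a1 b] a1Q pQ unfolding Q_def by simp
  have sb1: "Lf p b1 = Gf p b b1" using Lf_small[OF pr, of b1 b] b1Q pQ unfolding Q_def by simp
  have sc1: "Lf p c1 = Gf p b c1" using Lf_small[OF pr, of c1 b] c1Q pQ unfolding Q_def by simp
  have sab: "Lf p (a1 + b1) = Gf p b (a1 + b1)" using Lf_small[OF pr, of "a1+b1" b] a1Q b1Q pQ unfolding Q_def by simp
  have sac: "Lf p (eps + a1 + c1) = Gf p b (eps + a1 + c1)"
    using Lf_small[OF pr, of "eps+a1+c1" b] a1Q c1Q pQ eps1 unfolding Q_def by simp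
  have key: "int (Gf p b (eps + a1 + c1)) - Gf p b c1 + Gf p b i + Gf p b b1 \<le> int (Gf p b (a1 + b1)) + Gf p b (eps + m)"
  proof -
    have im': "i \<le> m" using im unfolding m_def t_def .
    define y where "y = b1 + (m - i)"
    have cy: "[int y = int c1] (mod int (p^b))"
    proof -
      have "int y = (int i - s) mod int Q + (int m - int i)" unfolding y_def b1_def using im' Q0 by simp
      then have "int y mod int Q = (int i - s + (int m - int i)) mod int Q" by (simp only: mod_add_left_eq)
      then have "int y mod int Q = (int m - s) mod int Q" by simp
      then show ?thesis unfolding c1_def cong_def Q_def using p1 by simp
    qed
    have g1: "int (Gf p b (y + (eps + a1))) - Gf p b y = int (Gf p b (c1 + (eps + a1))) - Gf p b c1"
      by (rule G_period[OF _ cy]) (use p1 in simp)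
    define z where "z = b1 + a1"
    have cz: "[int z = int i] (mod int (p^b))"
    proof -
      have "int z = (int i - s) mod int Q + s mod int Q" unfolding z_def b1_def a1_def using Q0 by simp
      then have "int z mod int Q = (int i - s + s) mod int Q" by (simp only: mod_add_eq)
      then show ?thesis unfolding cong_def Q_def using p1 by simp
    qed
    have g2: "int (Gf p b (z + (m - i + eps))) - Gf p b z = int (Gf p b (i + (m - i + eps))) - Gf p b i"
      by (rule G_period[OF _ cz]) (use p1 in simp)
    have yz: "y + (eps + a1) = z + (m - i + eps)" unfolding y_def z_def using im' by simp
    have im2: "i + (m - i + eps) = eps + m" using im' by simp
    have mono: "Gf p b b1 \<le> Gf p b y" unfolding y_def by (rule G_mono) simp
    show ?thesis using g1 g2 yz im2 mono unfolding z_def by (simp add: ac_simps)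
  qed
  have im': "i \<le> m" using im unfolding m_def t_def .
  show ?thesis
    unfolding Q_def[symmetric] ha2 hb2 ndiv s_def[symmetric] b1_def[symmetric] a1_def[symmetric]
    using t2 t1 A B C Ln Lnm Lpi Li sa1 sb1 sc1 sab sac key im' by linarith
qed



definition Sb :: "int \<Rightarrow> nat \<Rightarrow> int \<Rightarrow> int poly \<Rightarrow> nat \<Rightarrow> int" where
  "Sb q n r f k = (if q dvd (int k - r) then int (n choose k) * (-1)^k * poly f ((int k - r) div q) else 0)"

definition S :: "int \<Rightarrow> nat \<Rightarrow> int \<Rightarrow> int poly \<Rightarrow> int" where
  "S q n r f = (\<Sum>k\<le>n. Sb q n r f k)"

lemma Sb_big: "n < k \<Longrightarrow> Sb q n r f k = 0" by (simp add: Sb_def)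

lemma S_ext: assumes "n \<le> N" shows "S q n r f = (\<Sum>k\<le>N. Sb q n r f k)"
  unfolding S_def
  by (rule sum.mono_neutral_left) (use assms in \<open>auto simp: Sb_big\<close>)

lemma Sb_pascal:
  "Sb q (Suc n) r f k = Sb q n r f k + (if k = 0 then 0 else - Sb q n (r-1) f (k-1))"
proof (cases k)
  case 0 then show ?thesis by (simp add: Sb_def)
next
  case (Suc j)
  have a: "int k - r = int j - (r - 1)" using Suc by simp
  show ?thesis unfolding Sb_def a using Suc by (simp add: algebra_simps)
qed

lemma S_pascal: "S q (Suc n) r f = S q n r f - S q n (r-1) f"
proof -
  have "S q (Suc n) r f = (\<Sum>k\<le>Suc n. Sb q n r f k) + (\<Sum>k\<le>Suc n. (if k = 0 then 0 else - Sb q n (r-1) f (k-1)))"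
    unfolding S_def Sb_pascal sum.distrib ..
  also have "(\<Sum>k\<le>Suc n. Sb q n r f k) = S q n r f" by (rule S_ext[symmetric]) simp
  also have "(\<Sum>k\<le>Suc n. (if k = 0 then 0 else - Sb q n (r-1) f (k-1))) = - S q n (r-1) f"
    unfolding sum.atMost_Suc_shift S_def by (simp add: sum_negf)
  finally show ?thesis by simp
qed

lemma Sb_deg:
  assumes "q \<noteq> 0"
  shows "q * Sb q n r (pCons 0 g) k = (if k = 0 then 0 else -(int n * Sb q (n-1) (r-1) g (k-1))) - r * Sb q n r g k"
proof (cases "q dvd (int k - r)")
  case False
  then show ?thesis
  proof (cases k)
    case (Suc j)
    have a: "int k - r = int j - (r - 1)" using Suc by simp
    show ?thesis using False unfolding Sb_def a using Suc by simp
  qed (simp add: Sb_def)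
next
  case True
  define x where "x = (int k - r) div q"
  have qx: "q * x = int k - r" unfolding x_def using True by simp
  have "q * Sb q n r (pCons 0 g) k = int (n choose k) * (-1)^k * (q * x) * poly g x"
    using True unfolding Sb_def x_def[symmetric] by (simp add: ac_simps)
  also have "\<dots> = int k * int (n choose k) * (-1)^k * poly g x - r * Sb q n r g k"
    unfolding qx using True unfolding Sb_def x_def[symmetric] by (simp add: algebra_simps)
  also have "int k * int (n choose k) * (-1)^k * poly g x = (if k = 0 then 0 else -(int n * Sb q (n-1) (r-1) g (k-1)))"
  proof (cases k)
    case 0 then show ?thesis by simp
  next
    case (Suc j)
    have a: "int k - r = int j - (r - 1)" using Suc by simp
    have b: "k * (n choose k) = n * ((n-1) choose j)" using times_binomial_minus1_eq[of k n] Suc by simp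
    have "int k * int (n choose k) = int n * int ((n-1) choose j)" using b by (metis of_nat_mult)
    then show ?thesis using True Suc unfolding Sb_def x_def a by (simp add: algebra_simps)
  qed
  finally show ?thesis .
qed

lemma S_deg:
  assumes "q \<noteq> 0"
  shows "q * S q n r (pCons 0 g) = -(int n * S q (n-1) (r-1) g) - r * S q n r g"
proof -
  have "q * S q n r (pCons 0 g) = (\<Sum>k\<le>n. (if k = 0 then 0 else -(int n * Sb q (n-1) (r-1) g (k-1)))) - r * S q n r g"
    unfolding S_def sum_distrib_left Sb_deg[OF assms] sum_subtractf by simp
  also have "(\<Sum>k\<le>n. (if k = 0 then 0 else -(int n * Sb q (n-1) (r-1) g (k-1)))) = -(int n * S q (n-1) (r-1) g)"
  proof (cases n)
    case 0 then show ?thesis by simp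
  next
    case (Suc n')
    show ?thesis unfolding Suc sum.atMost_Suc_shift S_def by (simp add: sum_negf sum_distrib_left)
  qed
  finally show ?thesis .
qed

lemma S_lin: "S q n r (pCons c g) = c * S q n r 1 + S q n r (pCons 0 g)"
  unfolding S_def sum_distrib_left sum.distrib[symmetric]
  by (rule sum.cong) (auto simp: Sb_def algebra_simps)

lemma S_zero[simp]: "S q n r 0 = 0" unfolding S_def Sb_def by (simp only: poly_0 mult_zero_right if_cancel sum.neutral_const)



lemma alt_step:
  fixes h :: "int \<Rightarrow> int"
  shows "(\<Sum>i\<le>Suc j. int (Suc j choose i) * (-1)^i * h (r - int i)) =
    (\<Sum>i\<le>j. int (j choose i) * (-1)^i * h (r - int i)) - (\<Sum>i\<le>j. int (j choose i) * (-1)^i * h (r - 1 - int i))"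
proof -
  have e: "r - int (Suc i) = r - 1 - int i" for i by simp
  have L: "(\<Sum>i\<le>Suc j. int (Suc j choose i) * (-1)^i * h (r - int i)) =
      h r - (\<Sum>i\<le>j. int (j choose i) * (-1)^i * h (r - 1 - int i)) - (\<Sum>i\<le>j. int (j choose Suc i) * (-1)^i * h (r - 1 - int i))"
  proof -
    have pt: "int (Suc j choose Suc i) * (-1)^Suc i * h (r-1-int i) = - (int (j choose i) * (-1)^i * h (r - 1 - int i)) - int (j choose Suc i) * (-1)^i * h (r - 1 - int i)" for i
      by (simp add: algebra_simps)
    show ?thesis unfolding sum.atMost_Suc_shift e pt sum_subtractf sum_negf by simp
  qed
  have "(\<Sum>i\<le>j. int (j choose i) * (-1)^i * h (r - int i)) = (\<Sum>i\<le>Suc j. int (j choose i) * (-1)^i * h (r - int i))"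
    by simp
  also have "\<dots> = h r - (\<Sum>i\<le>j. int (j choose Suc i) * (-1)^i * h (r - 1 - int i))"
    unfolding sum.atMost_Suc_shift e by (simp add: sum_negf)
  finally show ?thesis using L by simp
qed

lemma S_iter: "S q (m + j) r f = (\<Sum>i\<le>j. int (j choose i) * (-1)^i * S q m (r - int i) f)"
proof (induction j arbitrary: r)
  case 0 then show ?case by simp
next
  case (Suc j)
  have "S q (m + Suc j) r f = S q (m + j) r f - S q (m + j) (r - 1) f" by (simp add: S_pascal)
  also have "\<dots> = (\<Sum>i\<le>j. int (j choose i) * (-1)^i * S q m (r - int i) f) - (\<Sum>i\<le>j. int (j choose i) * (-1)^i * S q m (r - 1 - int i) f)"
    using Suc.IH[of r] Suc.IH[of "r-1"] by simp
  also have "\<dots> = (\<Sum>i\<le>Suc j. int (Suc j choose i) * (-1)^i * S q m (r - int i) f)"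
    using alt_step[of j "\<lambda>x. S q m x f" r] by simp
  finally show ?case .
qed

lemma S_allres:
  assumes "p > 0" "m > 0"
  shows "(\<Sum>i<p. S (int p) m (r - int i) 1) = 0"
proof -
  have c: "(\<Sum>i<p. if int p dvd (int k - (r - int i)) then (1::int) else 0) = 1" for k
  proof -
    define i0 where "i0 = nat ((r - int k) mod int p)"
    have i0p: "i0 < p" unfolding i0_def using assms by (simp add: nat_less_iff)
    have iff: "int p dvd (int k - (r - int i)) \<longleftrightarrow> i = i0" if "i < p" for i
    proof -
      have "int p dvd (int k - (r - int i)) \<longleftrightarrow> [int i = r - int k] (mod int p)"
        by (simp add: cong_iff_dvd_diff algebra_simps dvd_diff_commute)
      also have "\<dots> \<longleftrightarrow> int i mod int p = (r - int k) mod int p" by (simp add: cong_def)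
      also have "\<dots> \<longleftrightarrow> int i = (r - int k) mod int p" using that by simp
      also have "\<dots> \<longleftrightarrow> i = i0" unfolding i0_def using assms by auto
      finally show ?thesis .
    qed
    have "(\<Sum>i<p. if int p dvd (int k - (r - int i)) then (1::int) else 0) = (\<Sum>i<p. if i = i0 then 1 else 0)"
      by (rule sum.cong) (auto simp: iff)
    then show ?thesis using i0p by simp
  qed
  have "(\<Sum>i<p. S (int p) m (r - int i) 1) = (\<Sum>k\<le>m. \<Sum>i<p. Sb (int p) m (r - int i) 1 k)"
    unfolding S_def by (rule sum.swap)
  also have "\<dots> = (\<Sum>k\<le>m. int (m choose k) * (-1)^k * (\<Sum>i<p. if int p dvd (int k - (r - int i)) then 1 else 0))"
    unfolding Sb_def by (intro sum.cong refl) (simp add: sum_distrib_left if_distrib cong: if_cong)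
  also have "\<dots> = (\<Sum>k\<le>m. (-1)^k * int (m choose k))" unfolding c by (simp add: ac_simps)
  also have "\<dots> = 0" using choose_alternating_sum[OF assms(2)] by simp
  finally show ?thesis .
qed

lemma choose_pm1:
  assumes "prime p" "i \<le> p - 1"
  shows "int p dvd int (p - 1 choose i) * (-1)^i - 1"
  using assms(2)
proof (induction i)
  case 0 then show ?case by simp
next
  case (Suc i)
  have p1: "p > 1" using assms prime_gt_1_nat by blast
  have "p dvd (p choose Suc i)" by (rule dvd_choose_prime) (use Suc.prems p1 assms in auto)
  then have d: "int p dvd int (p choose Suc i)" by simp
  have "p choose Suc i = (p - 1 choose i) + (p - 1 choose Suc i)"
    using binomial_Suc_Suc[of "p-1" i] p1 by simp
  then have "int (p - 1 choose Suc i) * (-1)^Suc i - 1 =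
      (int (p - 1 choose i) * (-1)^i - 1) - (-1)^i * int (p choose Suc i)"
    by (simp add: algebra_simps)
  note eq = this
  have IH: "int p dvd int (p - 1 choose i) * (-1)^i - 1" using Suc by simp
  have d2: "int p dvd (-1)^i * int (p choose Suc i)" using d by simp
  show ?case unfolding eq by (rule dvd_diff[OF IH d2])
qed

lemma Fleck:
  assumes pr: "prime p"
  shows "n \<ge> 1 \<Longrightarrow> int p ^ ((n - 1) div (p - 1)) dvd S (int p) n r 1"
proof (induction n arbitrary: r rule: less_induct)
  case (less n)
  have p1: "p > 1" using pr prime_gt_1_nat by blast
  show ?case
  proof (cases "n < p")
    case True
    then have "(n - 1) div (p - 1) = 0" using p1 by (intro div_less) linarith
    then show ?thesis by simp
  next
    case False
    define m where "m = n - (p - 1)"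
    have m1: "m \<ge> 1" "m < n" unfolding m_def using False p1 by auto
    have nm: "n = m + (p - 1)" unfolding m_def using False by simp
    have "n - 1 = (m - 1) + (p - 1)" using nm m1 by simp
    moreover have "((m - 1) + (p - 1)) div (p - 1) = (m - 1) div (p - 1) + 1"
      using p1 div_add_self2[of "p-1" "m-1"] by linarith
    ultimately have ex: "(n - 1) div (p - 1) = (m - 1) div (p - 1) + 1" by simp
    have IH: "int p ^ ((m - 1) div (p - 1)) dvd S (int p) m x 1" for x
      using less.IH[OF m1(2) m1(1)] .
    have "S (int p) n r 1 = (\<Sum>i\<le>p-1. int (p - 1 choose i) * (-1)^i * S (int p) m (r - int i) 1)"
      unfolding nm by (rule S_iter)
    also have "\<dots> = (\<Sum>i\<le>p-1. (int (p - 1 choose i) * (-1)^i - 1) * S (int p) m (r - int i) 1)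
                   + (\<Sum>i\<le>p-1. S (int p) m (r - int i) 1)"
      by (simp add: sum.distrib[symmetric] algebra_simps)
    also have "(\<Sum>i\<le>p-1. S (int p) m (r - int i) 1) = 0"
    proof -
      have "{..p-1} = {..<p}" using p1 by auto
      then show ?thesis using S_allres[of p m r] p1 m1 by simp
    qed
    finally have eq: "S (int p) n r 1 = (\<Sum>i\<le>p-1. (int (p - 1 choose i) * (-1)^i - 1) * S (int p) m (r - int i) 1)"
      by simp
    have "int p ^ ((n - 1) div (p - 1)) dvd (int (p - 1 choose i) * (-1)^i - 1) * S (int p) m (r - int i) 1"
      if "i \<in> {..p-1}" for i
      unfolding ex power_add using mult_dvd_mono[OF IH[of "r - int i"] choose_pm1[OF pr, of i]] that
      by (simp add: ac_simps)
    then show ?thesis unfolding eq by (intro dvd_sum) auto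
  qed
qed

lemma Lf_bound:
  assumes pr: "prime p"
  shows "n \<ge> 1 \<Longrightarrow> (p - 1) * Lf p n \<le> n - 1"
proof (induction n rule: less_induct)
  case (less n)
  have p1: "p > 1" using pr prime_gt_1_nat by blast
  show ?case
  proof (cases "n div p = 0")
    case True
    then show ?thesis using Lf_div[OF pr, of n] by simp
  next
    case False
    have lt: "n div p < n" using p1 less.prems by simp
    have IH: "(p - 1) * Lf p (n div p) \<le> n div p - 1" using less.IH[OF lt] False by simp
    have "(p - 1) * Lf p n = (p - 1) * (n div p) + (p - 1) * Lf p (n div p)"
      using Lf_div[OF pr, of n] by (simp add: algebra_simps)
    also have "\<dots> \<le> (p - 1) * (n div p) + (n div p - 1)" using IH by simp
    also have "\<dots> = p * (n div p) - 1" using False p1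
      by (simp add: algebra_simps diff_mult_distrib)
    also have "\<dots> \<le> n - 1" using times_div_less_eq_dividend[of p n] by linarith
    finally show ?thesis .
  qed
qed

lemma S_const_dvd:
  assumes pr: "prime p"
  shows "int p ^ Lf p n dvd S (int p) n r 1"
proof (cases "n = 0")
  case True then show ?thesis by simp
next
  case False
  have p1: "p > 1" using pr prime_gt_1_nat by blast
  have "(p - 1) * Lf p n \<le> n - 1" using Lf_bound[OF pr] False by simp
  then have "Lf p n \<le> (n - 1) div (p - 1)" using p1
    by (metis One_nat_def div_le_mono nonzero_mult_div_cancel_left zero_less_diff
        less_numeral_extra(3))
  then have "int p ^ Lf p n dvd int p ^ ((n - 1) div (p - 1))" by (rule le_imp_power_dvd)
  also have "\<dots> dvd S (int p) n r 1" using Fleck[OF pr] False by simp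
  finally show ?thesis .
qed



lemma pCons_deg_split:
  assumes "degree (pCons c g) \<le> Suc d" shows "degree g \<le> d"
  using assms by (cases "g = 0") auto

lemma pCons_deg0:
  assumes "degree (pCons c g) \<le> 0" shows "g = 0"
  using assms by (cases "g = 0") auto

lemma mult_dvd_int: assumes "prime p" "n > 0"
  shows "int p ^ Lf p n = int p ^ Lf p (n - 1) * int p ^ multiplicity p n"
    and "int p ^ multiplicity p n dvd int n"
proof -
  have "n = Suc (n - 1)" using assms by simp
  then have "Lf p n = Lf p (n - 1) + multiplicity p n" using Lf_Suc[OF assms(1), of "n-1"] by simp
  then show "int p ^ Lf p n = int p ^ Lf p (n - 1) * int p ^ multiplicity p n" by (simp add: power_add)
  have "p ^ multiplicity p n dvd n" by (rule multiplicity_dvd)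
  then show "int p ^ multiplicity p n dvd int n" by (metis of_nat_dvd_iff of_nat_power)
qed

lemma level1:
  assumes pr: "prime p"
  shows "degree f \<le> d \<Longrightarrow> int p ^ Lf p n dvd int p ^ d * S (int p) n r f"
proof (induction d arbitrary: f n r)
  case 0
  obtain c g where f: "f = pCons c g" by (cases f)
  have "g = 0" using pCons_deg0 0 unfolding f by simp
  then have "S (int p) n r f = c * S (int p) n r 1" unfolding f S_lin[of _ _ _ c g] by simp
  then show ?case using S_const_dvd[OF pr, of n r] by simp
next
  case (Suc d)
  obtain c g where f: "f = pCons c g" by (cases f)
  have dg: "degree g \<le> d" using pCons_deg_split Suc.prems unfolding f by blast
  have p0: "int p \<noteq> 0" using pr prime_gt_0_nat by simp
  have "int p ^ Suc d * S (int p) n r f = int p ^ Suc d * c * S (int p) n r 1 + int p ^ d * (int p * S (int p) n r (pCons 0 g))"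
    unfolding f S_lin[of _ _ _ c g] by (simp add: algebra_simps)
  also have "\<dots> = int p ^ Suc d * c * S (int p) n r 1 - int n * (int p ^ d * S (int p) (n-1) (r-1) g) - r * (int p ^ d * S (int p) n r g)"
    unfolding S_deg[OF p0] by (simp add: algebra_simps)
  finally have eq: "int p ^ Suc d * S (int p) n r f = int p ^ Suc d * c * S (int p) n r 1 - int n * (int p ^ d * S (int p) (n-1) (r-1) g) - r * (int p ^ d * S (int p) n r g)" .
  have A: "int p ^ Lf p n dvd int p ^ Suc d * c * S (int p) n r 1"
    using S_const_dvd[OF pr, of n r] by simp
  have B: "int p ^ Lf p n dvd int n * (int p ^ d * S (int p) (n-1) (r-1) g)"
  proof (cases "n = 0")
    case True then show ?thesis by simp
  next
    case False
    have e: "int p ^ Lf p n = int p ^ Lf p (n - 1) * int p ^ multiplicity p n"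
      using mult_dvd_int(1)[OF pr, of n] False by simp
    then show ?thesis unfolding e
      using mult_dvd_mono[OF mult_dvd_int(2)[OF pr, of n] Suc.IH[OF dg, of "n-1" "r-1"]] False
      by (simp add: ac_simps)
  qed
  have C: "int p ^ Lf p n dvd r * (int p ^ d * S (int p) n r g)" using Suc.IH[OF dg] by simp
  show ?case unfolding eq by (rule dvd_diff[OF dvd_diff[OF A B] C])
qed

lemma S1_const: "S 1 n r 1 = (if n = 0 then 1 else 0)"
proof -
  have "S 1 n r 1 = (\<Sum>k\<le>n. (-1)^k * int (n choose k))" unfolding S_def Sb_def by (simp add: ac_simps)
  then show ?thesis using choose_alternating_sum[of n] by (cases "n = 0") auto
qed

lemma level0:
  assumes pr: "prime p"
  shows "degree f \<le> d \<Longrightarrow> int p ^ (n + Lf p n) dvd int p ^ d * S 1 n r f"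
proof (induction d arbitrary: f n r)
  case 0
  obtain c g where f: "f = pCons c g" by (cases f)
  have "g = 0" using pCons_deg0 0 unfolding f by simp
  then have "S 1 n r f = c * S 1 n r 1" unfolding f S_lin[of _ _ _ c g] by simp
  then show ?case unfolding S1_const by simp
next
  case (Suc d)
  obtain c g where f: "f = pCons c g" by (cases f)
  have dg: "degree g \<le> d" using pCons_deg_split Suc.prems unfolding f by blast
  have "int p ^ Suc d * S 1 n r f = int p ^ Suc d * c * S 1 n r 1 + int p ^ Suc d * (1 * S 1 n r (pCons 0 g))"
    unfolding f S_lin[of _ _ _ c g] by (simp add: algebra_simps)
  also have "\<dots> = int p ^ Suc d * c * S 1 n r 1 - int p * (int n * (int p ^ d * S 1 (n-1) (r-1) g)) - int p * r * (int p ^ d * S 1 n r g)"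
  proof -
    have sd: "S 1 n r (pCons 0 g) = -(int n * S 1 (n-1) (r-1) g) - r * S 1 n r g" using S_deg[of 1 n r g] by simp
    show ?thesis unfolding sd by (simp add: algebra_simps)
  qed
  finally have eq: "int p ^ Suc d * S 1 n r f = int p ^ Suc d * c * S 1 n r 1 - int p * (int n * (int p ^ d * S 1 (n-1) (r-1) g)) - int p * r * (int p ^ d * S 1 n r g)" .
  have A: "int p ^ (n + Lf p n) dvd int p ^ Suc d * c * S 1 n r 1" unfolding S1_const by simp
  have B: "int p ^ (n + Lf p n) dvd int p * (int n * (int p ^ d * S 1 (n-1) (r-1) g))"
  proof (cases "n = 0")
    case True then show ?thesis by simp
  next
    case False
    have e: "int p ^ (n + Lf p n) = int p * (int p ^ multiplicity p n * int p ^ ((n - 1) + Lf p (n-1)))"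
      using mult_dvd_int(1)[OF pr, of n] False by (simp add: power_add ac_simps power_Suc[symmetric])
    show ?thesis unfolding e
      by (intro mult_dvd_mono dvd_refl mult_dvd_int(2)[OF pr] Suc.IH[OF dg]) (use False in simp)
  qed
  have C: "int p ^ (n + Lf p n) dvd int p * r * (int p ^ d * S 1 n r g)" using Suc.IH[OF dg] by simp
  show ?case unfolding eq by (rule dvd_diff[OF dvd_diff[OF A B] C])
qed



definition c1 :: "nat \<Rightarrow> nat \<Rightarrow> nat \<Rightarrow> nat \<Rightarrow> int" where
  "c1 p n t i = (\<Sum>k\<le>n. int (n choose (t + p*k)) * (-1)^(t + p*k) * int (k choose i))"

lemma reindex_res:
  fixes h :: "nat \<Rightarrow> int"
  assumes "t < p" and hz: "\<And>k. n < k \<Longrightarrow> h k = 0"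
  shows "(\<Sum>k\<le>n. if int p dvd (int k - int t) then h k else 0) = (\<Sum>k\<le>n. h (t + p*k))"
proof -
  have p0: "p > 0" using assms by simp
  have "(\<Sum>k\<le>n. h (t + p*k)) = (\<Sum>k\<in>{k. k \<le> n \<and> t + p*k \<le> n}. h (t + p*k))"
    by (rule sum.mono_neutral_right) (auto intro!: hz)
  also have "\<dots> = (\<Sum>k\<in>(\<lambda>k. t + p*k) ` {k. k \<le> n \<and> t + p*k \<le> n}. h k)"
    by (subst sum.reindex) (use p0 in \<open>auto simp: inj_on_def\<close>)
  also have "(\<lambda>k. t + p*k) ` {k. k \<le> n \<and> t + p*k \<le> n} = {k \<in> {..n}. int p dvd (int k - int t)}"
  proof (intro set_eqI iffI)
    fix k assume "k \<in> (\<lambda>k. t + p*k) ` {k. k \<le> n \<and> t + p*k \<le> n}"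
    then show "k \<in> {k \<in> {..n}. int p dvd (int k - int t)}" by auto
  next
    fix k assume k: "k \<in> {k \<in> {..n}. int p dvd (int k - int t)}"
    then obtain c where c: "int k - int t = int p * c" by (auto elim: dvdE)
    have "c \<ge> 0"
    proof (rule ccontr)
      assume "\<not> c \<ge> 0"
      then have "c \<le> -1" by simp
      then have "int p * c \<le> int p * (-1)" by (rule mult_left_mono) simp
      then have "int p * c \<le> - int p" by simp
      then show False using c assms by simp
    qed
    then have "int k = int (t + p * nat c)" using c by simp
    then have kk: "k = t + p * nat c" by (simp only: of_nat_eq_iff)
    have "nat c \<le> p * nat c" using p0 by simp
    moreover have "t + p * nat c \<le> n" using k kk by simp
    ultimately have "nat c \<le> n" by linarith
    show "k \<in> (\<lambda>k. t + p*k) ` {k. k \<le> n \<and> t + p*k \<le> n}"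
      unfolding kk using \<open>nat c \<le> n\<close> \<open>t + p * nat c \<le> n\<close> by (intro imageI) simp
  qed
  also have "(\<Sum>k\<in>{k \<in> {..n}. int p dvd (int k - int t)}. h k) = (\<Sum>k\<le>n. if int p dvd (int k - int t) then h k else 0)"
    by (rule sum.inter_filter) simp
  finally show ?thesis by simp
qed

lemma binom_inv:
  assumes "j \<le> n" "k \<le> n"
  shows "(\<Sum>i\<le>n. (-1)^i * int (i choose j) * int (k choose i)) = (if k = j then (-1)^j else 0)"
proof (cases "j \<le> k")
  case False
  have z: "\<forall>i\<in>{..n}. (-1)^i * int (i choose j) * int (k choose i) = 0"
  proof
    fix i show "(-1)^i * int (i choose j) * int (k choose i) = 0"
      using False by (cases "i < j") (auto simp: binomial_eq_0)
  qed
  have "(\<Sum>i\<le>n. (-1)^i * int (i choose j) * int (k choose i)) = 0" by (rule sum.neutral[OF z])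
  then show ?thesis using False by simp
next
  case True
  have "(\<Sum>i\<le>n. (-1)^i * int (i choose j) * int (k choose i)) = (\<Sum>i\<in>{j..k}. (-1)^i * int (i choose j) * int (k choose i))"
    by (rule sum.mono_neutral_right) (use assms in \<open>auto simp: binomial_eq_0\<close>)
  also have "\<dots> = (\<Sum>l\<in>{0..k-j}. (-1)^(l+j) * int ((l+j) choose j) * int (k choose (l+j)))"
    using sum.shift_bounds_cl_nat_ivl[of "\<lambda>i. (-1)^i * int (i choose j) * int (k choose i)" 0 j "k-j"] True
    by simp
  also have "\<dots> = (\<Sum>l\<in>{0..k-j}. (-1)^j * int (k choose j) * ((-1)^l * int ((k-j) choose l)))"
  proof (rule sum.cong[OF refl])
    fix l assume l: "l \<in> {0..k-j}"
    have "(k choose (l+j)) * ((l+j) choose j) = (k choose j) * ((k - j) choose (l + j - j))"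
      by (rule choose_mult) (use l True in auto)
    then have "int ((l+j) choose j) * int (k choose (l+j)) = int (k choose j) * int ((k-j) choose l)"
      by (metis add_diff_cancel_right' mult.commute of_nat_mult)
    then show "(-1)^(l+j) * int ((l+j) choose j) * int (k choose (l+j)) = (-1)^j * int (k choose j) * ((-1)^l * int ((k-j) choose l))"
      by (simp add: power_add algebra_simps)
  qed
  also have "\<dots> = (-1)^j * int (k choose j) * (\<Sum>l\<le>k-j. (-1)^l * int ((k-j) choose l))"
    by (simp add: sum_distrib_left atLeast0AtMost)
  also have "\<dots> = (if k = j then (-1)^j else 0)"
  proof (cases "k = j")
    case True then show ?thesis by simp
  next
    case False
    then have "k - j > 0" using \<open>j \<le> k\<close> by simp
    then show ?thesis using choose_alternating_sum[of "k-j"] False by simp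
  qed
  finally show ?thesis .
qed

lemma S_res:
  assumes "t < p"
  shows "S (int p) n (int t) f = (\<Sum>k\<le>n. int (n choose (t + p*k)) * (-1)^(t + p*k) * poly f (int k))"
proof -
  have p0: "p > 0" using assms by simp
  have "S (int p) n (int t) f = (\<Sum>k\<le>n. if int p dvd (int k - int t) then int (n choose k) * (-1)^k * poly f ((int k - int t) div int p) else 0)"
    unfolding S_def Sb_def ..
  also have "\<dots> = (\<Sum>k\<le>n. int (n choose (t + p*k)) * (-1)^(t + p*k) * poly f ((int (t + p*k) - int t) div int p))"
    by (rule reindex_res[OF assms, where h = "\<lambda>k. int (n choose k) * (-1)^k * poly f ((int k - int t) div int p)"]) simp
  also have "\<dots> = (\<Sum>k\<le>n. int (n choose (t + p*k)) * (-1)^(t + p*k) * poly f (int k))"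
    using p0 by simp
  finally show ?thesis .
qed

lemma S_compose:
  assumes p0: "p > 0" and M0: "M \<noteq> 0"
  shows "S (int p * M) n r f = (\<Sum>i\<le>n. (-1)^i * S M i (r div int p) f * c1 p n (nat (r mod int p)) i)"
proof -
  define t where "t = nat (r mod int p)"
  define s where "s = r div int p"
  have tp: "t < p" unfolding t_def using p0 by (simp add: nat_less_iff)
  have r: "r = int t + int p * s" unfolding t_def s_def using p0 by (simp add: mult.commute)
  define A where "A k = int (n choose (t + p*k)) * (-1)^(t + p*k)" for k
  define phi where "phi k = (if M dvd (int k - s) then poly f ((int k - s) div M) else 0)" for k
  define h where "h k = (if M dvd ((int k - int t) div int p - s) then int (n choose k) * (-1)^k * poly f (((int k - int t) div int p - s) div M) else 0)" for k
  have pt: "Sb (int p * M) n r f k = (if int p dvd (int k - int t) then h k else 0)" for k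
  proof (cases "int p dvd (int k - int t)")
    case True
    define X where "X = (int k - int t) div int p"
    have kX: "int k - int t = int p * X" unfolding X_def using True by simp
    have kr: "int k - r = int p * (X - s)" using kX r by (simp add: algebra_simps)
    have "int p * M dvd int k - r \<longleftrightarrow> M dvd X - s" unfolding kr using p0 by simp
    moreover have "(int k - r) div (int p * M) = (X - s) div M" unfolding kr using p0 by simp
    ultimately show ?thesis using True unfolding Sb_def h_def X_def[symmetric] by simp
  next
    case False
    have "\<not> int p * M dvd int k - r"
    proof
      assume "int p * M dvd int k - r"
      then have "int p dvd int k - r" by (rule dvd_mult_left)
      then have "int p dvd (int k - r) + int p * s" by simp
      then show False using False r by (simp add: algebra_simps)
    qed
    then show ?thesis using False unfolding Sb_def by simp
  qed
  have "S (int p * M) n r f = (\<Sum>k\<le>n. if int p dvd (int k - int t) then h k else 0)"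
    unfolding S_def pt ..
  also have "\<dots> = (\<Sum>k\<le>n. h (t + p*k))"
    by (rule reindex_res[OF tp]) (simp add: h_def)
  also have "\<dots> = (\<Sum>k\<le>n. A k * phi k)"
    by (rule sum.cong[OF refl]) (use p0 in \<open>simp add: h_def A_def phi_def\<close>)
  finally have L: "S (int p * M) n r f = (\<Sum>k\<le>n. A k * phi k)" .
  have Si: "S M i s f = (\<Sum>j\<le>n. int (i choose j) * (-1)^j * phi j)" if "i \<le> n" for i
    unfolding S_ext[OF that] Sb_def phi_def by (rule sum.cong[OF refl]) simp
  have ci: "c1 p n t i = (\<Sum>k\<le>n. A k * int (k choose i))" for i
    unfolding c1_def A_def ..
  have "(\<Sum>i\<le>n. (-1)^i * S M i s f * c1 p n t i)
      = (\<Sum>i\<le>n. \<Sum>j\<le>n. \<Sum>k\<le>n. A k * phi j * (-1)^j * ((-1)^i * int (i choose j) * int (k choose i)))"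
    by (rule sum.cong[OF refl]) (simp add: Si ci sum_distrib_left sum_distrib_right ac_simps)
  also have "\<dots> = (\<Sum>k\<le>n. \<Sum>j\<le>n. A k * phi j * (-1)^j * (\<Sum>i\<le>n. (-1)^i * int (i choose j) * int (k choose i)))"
  proof -
    let ?F = "\<lambda>i j k. A k * phi j * (-1)^j * ((-1)^i * int (i choose j) * int (k choose i))"
    have "(\<Sum>i\<le>n. \<Sum>j\<le>n. \<Sum>k\<le>n. ?F i j k) = (\<Sum>j\<le>n. \<Sum>i\<le>n. \<Sum>k\<le>n. ?F i j k)"
      by (rule sum.swap)
    also have "\<dots> = (\<Sum>j\<le>n. \<Sum>k\<le>n. \<Sum>i\<le>n. ?F i j k)"
      by (rule sum.cong[OF refl]) (rule sum.swap)
    also have "\<dots> = (\<Sum>k\<le>n. \<Sum>j\<le>n. \<Sum>i\<le>n. ?F i j k)"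
      by (rule sum.swap)
    finally show ?thesis by (simp add: sum_distrib_left)
  qed
  also have "\<dots> = (\<Sum>k\<le>n. \<Sum>j\<le>n. A k * phi j * (-1)^j * (if k = j then (-1)^j else 0))"
    by (intro sum.cong refl) (simp add: binom_inv)
  also have "\<dots> = (\<Sum>k\<le>n. A k * phi k)"
  proof (rule sum.cong[OF refl])
    fix k assume k: "k \<in> {..n}"
    have "(\<Sum>j\<le>n. A k * phi j * (-1)^j * (if k = j then (-1)^j else 0)) = (\<Sum>j\<le>n. if j = k then A k * phi k else 0)"
      by (rule sum.cong[OF refl]) (auto simp: power_mult_distrib[symmetric])
    also have "\<dots> = A k * phi k" using k by simp
    finally show "(\<Sum>j\<le>n. A k * phi j * (-1)^j * (if k = j then (-1)^j else 0)) = A k * phi k" .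
  qed
  finally show ?thesis using L unfolding s_def t_def by simp
qed

definition ffpoly :: "nat \<Rightarrow> int poly" where
  "ffpoly i = (\<Prod>j<i. [:- int j, 1:])"

lemma poly_ffpoly: "poly (ffpoly i) x = (\<Prod>j<i. x - int j)"
  by (simp add: ffpoly_def poly_prod)

lemma degree_ffpoly: "degree (ffpoly i) \<le> i"
proof (induction i)
  case 0 then show ?case by (simp add: ffpoly_def)
next
  case (Suc i)
  have "ffpoly (Suc i) = ffpoly i * [:- int i, 1:]" by (simp add: ffpoly_def)
  then have "degree (ffpoly (Suc i)) \<le> degree (ffpoly i) + degree [:- int i, 1:]"
    by (simp only: degree_mult_le)
  then show ?case using Suc by simp
qed

lemma ff_choose: "(\<Prod>j<i. int k - int j) = fact i * int (k choose i)"
proof (induction i)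
  case 0 then show ?case by simp
next
  case (Suc i)
  have nat_id: "Suc i * (k choose Suc i) = (k - i) * (k choose i)"
    using binomial_absorption[of i k] binomial_absorb_comp[of k i] by simp
  have "(int k - int i) * int (k choose i) = int (Suc i) * int (k choose Suc i)"
  proof (cases "i \<le> k")
    case True
    then have "int k - int i = int (k - i)" by simp
    then show ?thesis using nat_id by (metis of_nat_mult)
  next
    case False
    then show ?thesis by (simp add: binomial_eq_0)
  qed
  then show ?case using Suc by (simp add: algebra_simps)
qed

lemma c1_level1:
  assumes pr: "prime p" and tp: "t < p"
  shows "int p ^ Lf p n dvd int p ^ Lf p (p*i) * c1 p n t i"
proof -
  have "S (int p) n (int t) (ffpoly i) = (\<Sum>k\<le>n. int (n choose (t + p*k)) * (-1)^(t + p*k) * (fact i * int (k choose i)))"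
    unfolding S_res[OF tp] poly_ffpoly ff_choose ..
  also have "\<dots> = fact i * c1 p n t i" unfolding c1_def by (simp add: sum_distrib_left ac_simps)
  finally have e: "S (int p) n (int t) (ffpoly i) = fact i * c1 p n t i" .
  have d: "int p ^ Lf p n dvd int p ^ i * (fact i * c1 p n t i)"
    using level1[OF pr degree_ffpoly[of i], of n "int t"] unfolding e .
  have nz: "(fact i :: nat) \<noteq> 0" by simp
  have nu: "\<not> is_unit p" using prime_gt_1_nat[OF pr] by simp
  obtain u where u: "(fact i :: nat) = p ^ multiplicity p (fact i :: nat) * u" "\<not> p dvd u"
    using multiplicity_decompose'[OF nz nu] by blast
  have fi: "(fact i :: int) = int p ^ Lf p i * int u"
    unfolding Lf_def by (metis of_nat_fact of_nat_mult of_nat_power u(1))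
  have Lpi: "Lf p (p*i) = i + Lf p i" using Lf_mult[OF pr, of 0 i] pr prime_gt_0_nat by simp
  have "int p ^ i * (fact i * c1 p n t i) = int u * (int p ^ Lf p (p*i) * c1 p n t i)"
    unfolding fi Lpi by (simp add: power_add ac_simps)
  with d have d2: "int p ^ Lf p n dvd int u * (int p ^ Lf p (p*i) * c1 p n t i)" by simp
  have "coprime (int p) (int u)"
    by (rule prime_imp_coprime) (use pr u(2) in \<open>auto simp: of_nat_dvd_iff\<close>)
  then have "coprime (int p ^ Lf p n) (int u)" by simp
  then show ?thesis using d2 by (simp add: coprime_dvd_mult_right_iff)
qed

lemma c1_zero:
  assumes "p > 0" "\<not> (t \<le> n \<and> i \<le> (n - t) div p)"
  shows "c1 p n t i = 0"
  unfolding c1_def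
proof (rule sum.neutral, rule ballI)
  fix k assume "k \<in> {..n}"
  show "int (n choose (t + p*k)) * (-1)^(t + p*k) * int (k choose i) = 0"
  proof (cases "i \<le> k")
    case False then show ?thesis by (simp add: binomial_eq_0)
  next
    case True
    have "n < t + p*k"
    proof (cases "t \<le> n")
      case False then show ?thesis by simp
    next
      case tn: True
      then have "(n - t) div p < k" using assms True by simp
      then have "n - t < p * k" using assms(1) by (simp add: div_less_iff_less_mult mult.commute)
      then show ?thesis by simp
    qed
    then show ?thesis by (simp add: binomial_eq_0)
  qed
qed



lemma level:
  assumes pr: "prime p" and df: "degree f \<le> d"
  shows "int p ^ (Lf p (n div p^b) + carries p (nat (r mod int (p^b))) (nat ((int n - r) mod int (p^b))))
         dvd int p ^ d * S (int (p * p^b)) n r f"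
proof (induction b arbitrary: n r)
  case 0
  have "carries p 0 0 = 0" by (simp add: carries_def)
  then show ?case using level1[OF pr df, of n r] by simp
next
  case (Suc b)
  have p0: "p > 0" using pr prime_gt_0_nat by blast
  define M where "M = int (p * p^b)"
  have M0: "M \<noteq> 0" unfolding M_def using p0 by simp
  define t where "t = nat (r mod int p)"
  define s where "s = r div int p"
  have tp: "t < p" unfolding t_def using p0 by (simp add: nat_less_iff)
  define E where "E = Lf p (n div p^Suc b) + carries p (nat (r mod int (p^Suc b))) (nat ((int n - r) mod int (p^Suc b)))"
  have eqS: "int p ^ d * S (int (p * p^Suc b)) n r f = (\<Sum>i\<le>n. (-1)^i * (int p ^ d * S M i s f) * c1 p n t i)"
  proof -
    have e: "int (p * p^Suc b) = int p * M" unfolding M_def by simp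
    show ?thesis unfolding e S_compose[OF p0 M0, of n r f] s_def[symmetric] t_def[symmetric]
      by (simp add: sum_distrib_left ac_simps)
  qed
  have tm: "int p ^ E dvd (-1)^i * (int p ^ d * S M i s f) * c1 p n t i" if "i \<in> {..n}" for i
  proof (cases "t \<le> n \<and> i \<le> (n - t) div p")
    case False
    then show ?thesis using c1_zero[OF p0 False] by simp
  next
    case True
    define Ei where "Ei = Lf p (i div p^b) + carries p (nat (s mod int (p^b))) (nat ((int i - s) mod int (p^b)))"
    have NLi: "E + Lf p (p*i) \<le> Ei + Lf p n"
      using NL[OF pr, of r n i b] True unfolding E_def Ei_def t_def s_def by (simp add: ac_simps)
    have IH: "int p ^ Ei dvd int p ^ d * S M i s f" using Suc.IH[of i s] unfolding Ei_def M_def .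
    have C: "int p ^ Lf p n dvd int p ^ Lf p (p*i) * c1 p n t i" by (rule c1_level1[OF pr tp])
    have "int p ^ Ei * int p ^ Lf p n dvd (int p ^ d * S M i s f) * (int p ^ Lf p (p*i) * c1 p n t i)"
      by (rule mult_dvd_mono[OF IH C])
    then have "int p ^ (Ei + Lf p n) dvd int p ^ Lf p (p*i) * ((int p ^ d * S M i s f) * c1 p n t i)"
      by (simp add: power_add ac_simps)
    moreover have "int p ^ (E + Lf p (p*i)) dvd int p ^ (Ei + Lf p n)" by (rule le_imp_power_dvd[OF NLi])
    ultimately have "int p ^ Lf p (p*i) * int p ^ E dvd int p ^ Lf p (p*i) * ((int p ^ d * S M i s f) * c1 p n t i)"
      by (simp add: power_add ac_simps dvd_trans)
    then have "int p ^ E dvd (int p ^ d * S M i s f) * c1 p n t i"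
      using p0 by (subst (asm) dvd_mult_cancel_left) simp
    then show ?thesis by (simp add: ac_simps)
  qed
  have "int p ^ E dvd int p ^ d * S (int (p * p^Suc b)) n r f"
    unfolding eqS by (rule dvd_sum) (rule tm)
  then show ?case unfolding E_def .
qed



lemma sum_int_nat:
  fixes g :: "int \<Rightarrow> int"
  shows "(\<Sum>k\<in>{k\<in>{0..int n}. P k}. g k) = (\<Sum>k\<le>n. if P (int k) then g (int k) else 0)"
proof -
  have im: "{k\<in>{0..int n}. P k} = int ` {k\<in>{..n}. P (int k)}"
  proof (intro set_eqI iffI)
    fix k assume k: "k \<in> {k\<in>{0..int n}. P k}"
    then have "k = int (nat k)" "nat k \<in> {k\<in>{..n}. P (int k)}" by auto
    then show "k \<in> int ` {k\<in>{..n}. P (int k)}" by (metis imageI)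
  qed auto
  have "(\<Sum>k\<in>{k\<in>{0..int n}. P k}. g k) = (\<Sum>k\<in>{k\<in>{..n}. P (int k)}. g (int k))"
    unfolding im by (subst sum.reindex) (auto simp: inj_on_def)
  also have "\<dots> = (\<Sum>k\<le>n. if P (int k) then g (int k) else 0)"
    by (rule sum.inter_filter) simp
  finally show ?thesis .
qed

lemma bsa_S: "binom_sum_approx p F \<alpha> n r m = S (int p ^ \<alpha>) n r (F m)"
  unfolding binom_sum_approx_def S_def Sb_def sum_int_nat
  by (rule sum.cong[OF refl]) (simp add: cong_iff_dvd_diff)

lemma S_add: "S q n r (f + g) = S q n r f + S q n r g"
  unfolding S_def Sb_def sum.distrib[symmetric] by (rule sum.cong[OF refl]) (simp add: algebra_simps)

lemma S_dvd_coeffs: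
  assumes "\<And>i. c dvd coeff h i"
  shows "c dvd S q n r h"
proof -
  have "c dvd poly h x" for x
    unfolding poly_altdef by (intro dvd_sum dvd_mult2 assms)
  then show ?thesis unfolding S_def Sb_def by (intro dvd_sum) auto
qed

lemma cancel_pow:
  fixes X :: int
  assumes "prime p" "int p ^ E dvd int p ^ d * X"
  shows "int p ^ nat (int E - int d) dvd X"
proof (cases "E \<le> d")
  case True then show ?thesis by simp
next
  case False
  then have e: "E = (E - d) + d" "nat (int E - int d) = E - d" by auto
  have "int p ^ d * int p ^ (E - d) dvd int p ^ d * X"
    using assms(2) by (subst (asm) e(1)) (simp add: power_add ac_simps)
  then show ?thesis unfolding e(2) using assms(1) prime_gt_0_nat[OF assms(1)]
    by (subst (asm) dvd_mult_cancel_left) simp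
qed

theorem theorem1p1:
  fixes p \<alpha> n :: nat and r :: int and F :: "nat \<Rightarrow> int poly"
  assumes "prime p" and "padic_poly_seq p F"
  shows "padic_ord_ge p (binom_sum_approx p F \<alpha> n r)
           (int (multiplicity p (fact (floor_div_pow p \<alpha> n) :: nat))
            - int (padic_poly_deg p F)
            + int (carries p (frac_mod p \<alpha> r) (frac_mod p \<alpha> (int n - r))))"
proof -
  note pr = assms(1)
  have p0: "p > 0" using pr prime_gt_0_nat by blast
  obtain D where D: "\<And>m. degree (F m) \<le> D" using assms(2) unfolding padic_poly_seq_def by blast
  define d where "d = padic_poly_deg p F"
  have ex: "\<exists>d. \<forall>i>d. padic_zero p (\<lambda>m. coeff (F m) i)"
  proof (intro exI allI impI)
    fix i assume "D < i"
    then have "coeff (F m) i = 0" for m using D[of m] by (intro coeff_eq_0) simp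
    then show "padic_zero p (\<lambda>m. coeff (F m) i)" unfolding padic_zero_def by simp
  qed
  have hz: "\<forall>i>d. padic_zero p (\<lambda>m. coeff (F m) i)"
    unfolding d_def padic_poly_deg_def by (rule LeastI_ex[OF ex])
  define E where "E = Lf p (floor_div_pow p \<alpha> n) + carries p (frac_mod p \<alpha> r) (frac_mod p \<alpha> (int n - r))"
  define B where "B = int (multiplicity p (fact (floor_div_pow p \<alpha> n) :: nat)) - int (padic_poly_deg p F)
            + int (carries p (frac_mod p \<alpha> r) (frac_mod p \<alpha> (int n - r)))"
  have BE: "nat B = nat (int E - int d)" unfolding B_def E_def d_def Lf_def by simp
  have main: "int p ^ E dvd int p ^ d * S (int p ^ \<alpha>) n r f" if df: "degree f \<le> d" for f
  proof (cases "\<alpha> = 0")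
    case True
    have "Lf p (p * n) = n + Lf p n" using Lf_mult[OF pr, of 0 n] p0 by simp
    moreover have "carries p 0 0 = 0" by (simp add: carries_def)
    ultimately have "E = n + Lf p n" unfolding E_def floor_div_pow_def frac_mod_def using True by simp
    then show ?thesis using level0[OF pr df, of n r] True by simp
  next
    case False
    define b where "b = \<alpha> - 1"
    have a: "\<alpha> = Suc b" unfolding b_def using False by simp
    have "E = Lf p (n div p^b) + carries p (nat (r mod int (p^b))) (nat ((int n - r) mod int (p^b)))"
      unfolding E_def floor_div_pow_def frac_mod_def using False unfolding b_def by simp
    moreover have "int p ^ \<alpha> = int (p * p^b)" unfolding a by simp
    ultimately show ?thesis using level[OF pr df, of n b r] by simp
  qed
  show ?thesis
    unfolding padic_ord_ge_def B_def[symmetric]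
  proof (intro allI impI)
    fix m assume mB: "nat B \<le> m"
    define G where "G = poly_cutoff (Suc d) (F m)"
    define H where "H = F m - G"
    have dG: "degree G \<le> d" unfolding G_def by (rule degree_le) (simp add: coeff_poly_cutoff)
    have cH: "int p ^ m dvd coeff H i" for i
    proof (cases "i \<le> d")
      case True then show ?thesis by (simp add: H_def G_def coeff_poly_cutoff)
    next
      case False
      then have "padic_zero p (\<lambda>m. coeff (F m) i)" using hz by simp
      then have "[coeff (F m) i = 0] (mod int p ^ m)" unfolding padic_zero_def by blast
      then show ?thesis using False by (simp add: H_def G_def coeff_poly_cutoff cong_0_iff)
    qed
    have split: "S (int p ^ \<alpha>) n r (F m) = S (int p ^ \<alpha>) n r G + S (int p ^ \<alpha>) n r H"
      unfolding H_def S_add[symmetric] by simp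
    have dH: "int p ^ nat B dvd S (int p ^ \<alpha>) n r H"
      using dvd_trans[OF le_imp_power_dvd[OF mB] S_dvd_coeffs[OF cH]] .
    have dGm: "int p ^ nat B dvd S (int p ^ \<alpha>) n r G"
      unfolding BE by (rule cancel_pow[OF pr main[OF dG]])
    show "[binom_sum_approx p F \<alpha> n r m = 0] (mod int p ^ nat B)"
      unfolding bsa_S cong_0_iff split using dH dGm by simp
  qed
qed


end
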